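(* $(M_0,\mathrm{id})$ with the path metric is an initial object in $\mathsf{SquaMS}$.
   Context: Let $M_0=\{(r,s)\in[0,1]^2: r\in\{0,1\}\text{ or } s\in\{0,1\}\}$ be the boundary of the unit square. Its path metric: two points on the same side have distance equal to their distance in $[0,1]$; points on adjacent sides sharing a corner $c$ have distance $d(x,c)+d(c,y)$; points on opposite sides have distance $\min(d(x,c_1)+1+d(c_2,y))$ over the two remaining sides with endpoints $c_1$ on the side of $x$ and $c_2$ on the side of $y$. A square metric space is a pair $(X,S_X)$ with $X$ a metric space with all distances at most $2$ and $S_X\colon M_0\to X$ injective such that (sq1) for $i\in\{0,1\}$, $r,s\in[0,1]$: $d_X(S_X(i,r),S_X(i,s))=|s-r|$ and $d_X(S_X(r,i),S_X(s,i))=|s-r|$; (sq2) $d_X(S_X(r,s),S_X(t,u))\ge|r-t|+|s-u|$. $\mathsf{SquaMS}$ has these as objects and short maps $f\colon X\to Y$ with $f\circ S_X=S_Y$ as morphisms. *)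

theory Defs
  imports "HOL-Analysis.Analysis"
begin

definition M0 :: "(real \<times> real) set" where
  "M0 = {(r, s). r \<in> {0..1} \<and> s \<in> {0..1} \<and> (r \<in> {0, 1} \<or> s \<in> {0, 1})}"

text \<open>The path metric on M0, following the case distinction of the paper:
  same side; adjacent sides through a common corner; opposite sides
  (minimum over the two routes). Set to 0 outside M0 (irrelevant junk value).\<close>
definition sq_path_dist :: "real \<times> real \<Rightarrow> real \<times> real \<Rightarrow> real" where
  "sq_path_dist p q =
    (if p \<in> M0 \<and> q \<in> M0 then
      (let r = fst p; s = snd p; t = fst q; u = snd q in
       if (r = 0 \<and> t = 0) \<or> (r = 1 \<and> t = 1) then \<bar>s - u\<bar>
       else if (s = 0 \<and> u = 0) \<or> (s = 1 \<and> u = 1) then \<bar>r - t\<bar>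
       else if r \<in> {0, 1} \<and> u \<in> {0, 1} then \<bar>s - u\<bar> + \<bar>r - t\<bar>
       else if s \<in> {0, 1} \<and> t \<in> {0, 1} then \<bar>r - t\<bar> + \<bar>s - u\<bar>
       else if r \<in> {0, 1} \<and> t \<in> {0, 1} then min (s + 1 + u) ((1 - s) + 1 + (1 - u))
       else min (r + 1 + t) ((1 - r) + 1 + (1 - t)))
     else 0)"

definition square_metric_space ::
    "'a set \<Rightarrow> ('a \<Rightarrow> 'a \<Rightarrow> real) \<Rightarrow> (real \<times> real \<Rightarrow> 'a) \<Rightarrow> bool" where
  "square_metric_space X d S \<longleftrightarrow>
     Metric_space X d \<and>
     (\<forall>x\<in>X. \<forall>y\<in>X. d x y \<le> 2) \<and>
     S ` M0 \<subseteq> X \<and> inj_on S M0 \<and>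
     (\<forall>i\<in>{0, 1}. \<forall>r\<in>{0..1}. \<forall>s\<in>{0..1}.
        d (S (i, r)) (S (i, s)) = \<bar>s - r\<bar> \<and> d (S (r, i)) (S (s, i)) = \<bar>s - r\<bar>) \<and>
     (\<forall>p\<in>M0. \<forall>q\<in>M0. d (S p) (S q) \<ge> \<bar>fst p - fst q\<bar> + \<bar>snd p - snd q\<bar>)"

definition squams_morphism ::
    "'a set \<Rightarrow> ('a \<Rightarrow> 'a \<Rightarrow> real) \<Rightarrow> (real \<times> real \<Rightarrow> 'a) \<Rightarrow>
     'b set \<Rightarrow> ('b \<Rightarrow> 'b \<Rightarrow> real) \<Rightarrow> (real \<times> real \<Rightarrow> 'b) \<Rightarrow> ('a \<Rightarrow> 'b) \<Rightarrow> bool" where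
  "squams_morphism X dX SX Y dY SY f \<longleftrightarrow>
     f ` X \<subseteq> Y \<and>
     (\<forall>x\<in>X. \<forall>y\<in>X. dY (f x) (f y) \<le> dX x y) \<and>
     (\<forall>p\<in>M0. f (SX p) = SY p)"

end

theory Submission imports Defs begin

definition phi :: "real \<times> real \<Rightarrow> real" where
  "phi p = (if snd p = 0 then fst p else if fst p = 1 then 1 + snd p
            else if snd p = 1 then 3 - fst p else 4 - snd p)"

definition cd :: "real \<Rightarrow> real \<Rightarrow> real" where
  "cd a b = min \<bar>a - b\<bar> (4 - \<bar>a - b\<bar>)"

lemma M0_cases:
  assumes "p \<in> M0"
  obtains s where "p = (0, s)" "0 \<le> s" "s \<le> 1"
  | s where "p = (1, s)" "0 \<le> s" "s \<le> 1"
  | r where "p = (r, 0)" "0 \<le> r" "r \<le> 1"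
  | r where "p = (r, 1)" "0 \<le> r" "r \<le> 1"
  using assms unfolding M0_def by (cases p) auto

lemma dist_eq:
  assumes "p \<in> M0" "q \<in> M0"
  shows "sq_path_dist p q = cd (phi p) (phi q)"
  using assms by (elim M0_cases) (auto simp: sq_path_dist_def phi_def cd_def M0_def Let_def split: if_splits)


lemma short:
  assumes sms: "square_metric_space X d S" and pq: "p \<in> M0" "q \<in> M0"
  shows "d (S p) (S q) \<le> sq_path_dist p q"
proof -
  have ms: "Metric_space X d" and sub: "S ` M0 \<subseteq> X"
    using sms unfolding square_metric_space_def by auto
  have sq1a: "d (S (i, r)) (S (i, s)) = \<bar>s - r\<bar>" if "i \<in> {0,1}" "r \<in> {0..1}" "s \<in> {0..1}" for i r s
    using sms that unfolding square_metric_space_def by blast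
  have sq1b: "d (S (r, i)) (S (s, i)) = \<bar>s - r\<bar>" if "i \<in> {0,1}" "r \<in> {0..1}" "s \<in> {0..1}" for i r s
    using sms that unfolding square_metric_space_def by blast
  have tri: "d (S x) (S z) \<le> d (S x) (S y) + d (S y) (S z)" if "x \<in> M0" "y \<in> M0" "z \<in> M0" for x y z
    using Metric_space.triangle[OF ms] sub that by blast
  have cM: "(0,0) \<in> M0" "(0,1) \<in> M0" "(1,0) \<in> M0" "(1,1) \<in> M0" by (auto simp: M0_def)
  have T: "d (S p) (S q) \<le> d (S p) (S (0,0)) + d (S (0,0)) (S q)" "d (S p) (S q) \<le> d (S p) (S (0,1)) + d (S (0,1)) (S q)" "d (S p) (S q) \<le> d (S p) (S (1,1)) + d (S (1,1)) (S q)" "d (S p) (S q) \<le> d (S p) (S (1,0)) + d (S (1,0)) (S q)" "d (S p) (S q) \<le> d (S p) (S (0,0)) + d (S (0,0)) (S (0,1)) + d (S (0,1)) (S q)" "d (S p) (S q) \<le> d (S p) (S (0,1)) + d (S (0,1)) (S (1,1)) + d (S (1,1)) (S q)" "d (S p) (S q) \<le> d (S p) (S (1,1)) + d (S (1,1)) (S (1,0)) + d (S (1,0)) (S q)" "d (S p) (S q) \<le> d (S p) (S (1,0)) + d (S (1,0)) (S (0,0)) + d (S (0,0)) (S q)" "d (S p) (S q) \<le> d (S p) (S (0,1)) + d (S (0,1)) (S (0,0)) + d (S (0,0)) (S q)" "d (S p) (S q) \<le> d (S p) (S (1,1)) + d (S (1,1)) (S (0,1)) + d (S (0,1)) (S q)"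 "d (S p) (S q) \<le> d (S p) (S (1,0)) + d (S (1,0)) (S (1,1)) + d (S (1,1)) (S q)" "d (S p) (S q) \<le> d (S p) (S (0,0)) + d (S (0,0)) (S (1,0)) + d (S (1,0)) (S q)"
    using tri[OF pq(1) _ pq(2)] tri[OF pq(1) _ pq(2)] cM tri[OF pq(1)] tri[OF _ _ pq(2)]
    by (meson order_trans add_right_mono | fastforce)+
  show ?thesis
    using pq T by (elim M0_cases; auto simp: sq_path_dist_def M0_def Let_def sq1a sq1b split: if_splits; linarith)
qed


lemma phi_range: "p \<in> M0 \<Longrightarrow> 0 \<le> phi p \<and> phi p < 4"
  by (elim M0_cases) (auto simp: phi_def)

lemma phi_inj: "p \<in> M0 \<Longrightarrow> q \<in> M0 \<Longrightarrow> phi p = phi q \<Longrightarrow> p = q"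
  by (elim M0_cases; auto simp: phi_def split: if_splits)

lemma M0_metric: "Metric_space M0 sq_path_dist"
proof
  fix x y show "0 \<le> sq_path_dist x y"
  proof (cases "x \<in> M0 \<and> y \<in> M0")
    case True then show ?thesis using phi_range[of x] phi_range[of y]
      by (simp add: dist_eq cd_def) arith
  qed (auto simp add: sq_path_dist_def)
next
  fix x y show "sq_path_dist x y = sq_path_dist y x"
  proof (cases "x \<in> M0 \<and> y \<in> M0")
    case True then show ?thesis
      by (simp add: dist_eq cd_def abs_minus_commute)
  qed (auto simp add: sq_path_dist_def)
next
  fix x y assume "x \<in> M0" "y \<in> M0"
  then show "sq_path_dist x y = 0 \<longleftrightarrow> x = y"
    using phi_range[of x] phi_range[of y] phi_inj[of x y]
    by (auto simp add: dist_eq cd_def)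
next
  fix x y z assume "x \<in> M0" "y \<in> M0" "z \<in> M0"
  then show "sq_path_dist x z \<le> sq_path_dist x y + sq_path_dist y z"
    using phi_range[of x] phi_range[of y] phi_range[of z]
    by (simp add: dist_eq cd_def) arith
qed

lemma M0_sms: "square_metric_space M0 sq_path_dist id"
  unfolding square_metric_space_def
proof (intro conjI ballI)
  show "Metric_space M0 sq_path_dist" by (rule M0_metric)
next
  fix x y assume "x \<in> M0" "y \<in> M0"
  then show "sq_path_dist x y \<le> 2" by (simp add: dist_eq cd_def)
next
  fix i r s :: real assume "i \<in> {0,1}" "r \<in> {0..1}" "s \<in> {0..1}"
  then show "sq_path_dist (id (i, r)) (id (i, s)) = \<bar>s - r\<bar>"
    and "sq_path_dist (id (r, i)) (id (s, i)) = \<bar>s - r\<bar>"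
    by (auto simp: sq_path_dist_def M0_def Let_def)
next
  fix p q assume "p \<in> M0" "q \<in> M0"
  then show "\<bar>fst p - fst q\<bar> + \<bar>snd p - snd q\<bar> \<le> sq_path_dist (id p) (id q)"
    by (elim M0_cases; auto simp: sq_path_dist_def M0_def Let_def split: if_splits; linarith)
qed auto

theorem mainTheorem18:
  shows "square_metric_space M0 sq_path_dist id \<and>
    (\<forall>(X :: 'a set) dX SX. square_metric_space X dX SX \<longrightarrow>
       (\<exists>f. squams_morphism M0 sq_path_dist id X dX SX f \<and>
          (\<forall>g. squams_morphism M0 sq_path_dist id X dX SX g \<longrightarrow> (\<forall>x\<in>M0. g x = f x))))"
proof (intro conjI allI impI)
  show "square_metric_space M0 sq_path_dist id" by (rule M0_sms)
next
  fix X :: "'a set" and dX SX assume sms: "square_metric_space X dX SX"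
  show "\<exists>f. squams_morphism M0 sq_path_dist id X dX SX f \<and>
          (\<forall>g. squams_morphism M0 sq_path_dist id X dX SX g \<longrightarrow> (\<forall>x\<in>M0. g x = f x))"
  proof (intro exI conjI allI impI ballI)
    show "squams_morphism M0 sq_path_dist id X dX SX SX"
      using sms short[OF sms] unfolding squams_morphism_def square_metric_space_def by auto
  next
    fix g x assume "squams_morphism M0 sq_path_dist id X dX SX g" "x \<in> M0"
    then show "g x = SX x" unfolding squams_morphism_def by auto
  qed
qed

end
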